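(* Let $k\ge 2$, $w=2^k-1$, $v=2^{k-1}$. For $j\ge 1$ let $\tilde U_j$ be the sequence of $2^j-1$ jumps of length $1$ followed by one jump of length $2^j+2^{j-1}-1$, and let $\tilde U_j^R$ be its reverse. Let $$\tilde H = 2w+v,\ \tilde U_{k-1},\tilde U_{k-2},\dots,\tilde U_2,\ 1,\ 2w,\ \tilde U_1^R,\tilde U_2^R,\dots,\tilde U_{k-1}^R,\ v+1.$$ Consider a line of $3w+2$ cells indexed $0,\dots,3w+1$ in which cells $w,\dots,2w-1$ are blocked, the frog stands on cell $3w$, and all other cells are empty, except that one cell $p$ with even index $p\in\{0,2,\dots,w-1\}$ may be either empty or already visited. Then for every such even $p$ there is a valid execution of $\tilde H$ which never lands on cell $p$, visits every other empty cell exactly once, and ends with the frog on cell $3w+1$.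
   Context: A frog on a line of cells performs a given sequence of positive jump lengths; for each jump it chooses a direction, moving from position $q$ to $q+J$ or $q-J$. An execution is valid if every landing cell lies on the line, is not blocked, and has not been visited before (the starting cell and any cell marked as already visited count as visited). Cells are indexed from $0$. *)

theory Defs
  imports Main
begin

text \<open>A frog on a line of n cells 0..n-1. Positions are integers so that q - J may be
  negative (then the landing is off the line).  frog_run n B V q Js rs: starting at q with
  visited set V (already containing q) and blocked set B, performing jumps Js lands
  successively on the cells rs, each landing valid.\<close>
fun frog_run :: "nat \<Rightarrow> int set \<Rightarrow> int set \<Rightarrow> int \<Rightarrow> nat list \<Rightarrow> int list \<Rightarrow> bool" where
  "frog_run n B V q [] [] = True"
| "frog_run n B V q (J # Js) (r # rs) =
     ((r = q + int J \<or> r = q - int J) \<and> 0 \<le> r \<and> r < int n \<and> r \<notin> B \<and> r \<notin> V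
      \<and> frog_run n B (insert r V) r Js rs)"
| "frog_run n B V q _ _ = False"

definition valid_execution :: "nat \<Rightarrow> int set \<Rightarrow> int set \<Rightarrow> int \<Rightarrow> nat list \<Rightarrow> int list \<Rightarrow> bool" where
  "valid_execution n B V s Js rs = frog_run n B (insert s V) s Js rs"

definition Ut :: "nat \<Rightarrow> nat list" where
  "Ut j = replicate (2^j - 1) 1 @ [2^j + 2^(j-1) - 1]"

definition Ht :: "nat \<Rightarrow> nat list" where
  "Ht k = (let w = 2^k - 1; v = 2^(k-1) in
     [2*w + v] @ concat (map Ut (rev [2..<k])) @ [1, 2*w]
     @ concat (map (\<lambda>j. rev (Ut j)) [1..<k]) @ [v + 1])"

end

theory Submission imports Defs begin



fun steps :: "int \<Rightarrow> nat list \<Rightarrow> int list \<Rightarrow> bool" where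
  "steps q [] [] = True"
| "steps q (J # Js) (r # rs) = (\<bar>r - q\<bar> = int J \<and> steps r Js rs)"
| "steps q _ _ = False"

lemma steps_len: "steps q Js rs \<Longrightarrow> length Js = length rs"
  by (induction q Js rs rule: steps.induct) auto

lemma frog_steps:
  "frog_run n B V q Js rs \<longleftrightarrow> steps q Js rs \<and> distinct rs \<and> set rs \<subseteq> {0..<int n} - B - V"
proof (induction Js arbitrary: rs q V)
  case Nil
  then show ?case by (cases rs) auto
next
  case (Cons J Js)
  show ?case
  proof (cases rs)
    case Nil
    then show ?thesis by auto
  next
    case (Cons r rs')
    have e: "(r = q + int J \<or> r = q - int J) \<longleftrightarrow> \<bar>r - q\<bar> = int J" by auto
    show ?thesis unfolding Cons frog_run.simps steps.simps e Cons.IH by auto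
  qed
qed

lemma steps_append:
  "length Js1 = length rs1 \<Longrightarrow>
   steps q (Js1 @ Js2) (rs1 @ rs2) \<longleftrightarrow> steps q Js1 rs1 \<and> steps (last (q # rs1)) Js2 rs2"
proof (induction Js1 arbitrary: rs1 q)
  case Nil
  then show ?case by simp
next
  case (Cons J Js)
  then show ?case by (cases rs1) auto
qed

lemma steps_rev:
  "steps q Js rs \<Longrightarrow> steps (last (q # rs)) (rev Js) (rev (butlast (q # rs)))"
proof (induction Js arbitrary: rs q)
  case Nil
  then show ?case by (cases rs) auto
next
  case (Cons J Js)
  then obtain r rs' where rs: "rs = r # rs'" by (cases rs) auto
  from Cons.prems rs have a: "\<bar>r - q\<bar> = int J" and b: "steps r Js rs'" by auto
  have IH: "steps (last (r # rs')) (rev Js) (rev (butlast (r # rs')))" using Cons.IH b by blast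
  have l: "last (last (r # rs') # rev (butlast (r # rs'))) = r"
    by (cases rs' rule: rev_cases) auto
  have len: "length (rev Js) = length (rev (butlast (r # rs')))"
    using steps_len[OF b] by simp
  have "steps (last (r # rs')) (rev Js @ [J]) (rev (butlast (r # rs')) @ [q])"
    using steps_append[OF len] IH l a by (simp add: abs_minus_commute)
  then show ?case using rs by simp
qed

lemma steps_shift: "steps q Js rs \<Longrightarrow> steps (q + d) Js (map (\<lambda>x. x + d) rs)"
  by (induction q Js rs rule: steps.induct) auto

lemma steps_up: "steps q (replicate n 1) [q+1..q+int n]"
proof (induction n arbitrary: q)
  case 0 then show ?case by simp
next
  case (Suc n)
  have "[q+1..q+int (Suc n)] = (q+1) # [q+1+1..q+1+int n]"
    by (subst upto.simps) (simp add: algebra_simps)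
  then show ?case using Suc[of "q+1"] by simp
qed

lemma steps_down: "steps q (replicate n 1) (rev [q-int n..q-1])"
proof (induction n arbitrary: q)
  case 0 then show ?case by simp
next
  case (Suc n)
  have "[q-int (Suc n)..q-1] = [q-1-int n..q-1-1] @ [q-1]"
    by (subst upto_rec2) (simp_all add: algebra_simps)
  then show ?case using Suc[of "q-1"] by simp
qed




primrec desc :: "nat \<Rightarrow> int \<Rightarrow> int \<Rightarrow> int list" where
  "desc 0 a p = []"
| "desc (Suc j) a p = (if j < 2 then [] else
     (let c = a + 2^j - 1 in
      if p < c then [c+1..c+2^j-1] @ [a + 2^(j-1) - 1] @ desc j a p
      else rev [a..c-1] @ [c + 2^(j-1)] @ desc j (c+1) p))"

lemma last_upto: "x \<le> y \<Longrightarrow> last [x..y] = y"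
  by (subst upto_rec2) auto

lemma desc_main:
  assumes "2 \<le> j" "even a" "a \<le> p" "p \<le> a + 2^j - 2" "even p"
  shows "steps (a + 2^(j-1) - 1) (concat (map Ut (rev [2..<j]))) (desc j a p)
    \<and> distinct ((a + 2^(j-1) - 1) # desc j a p)
    \<and> set ((a + 2^(j-1) - 1) # desc j a p) = {a..a+2^j-2} - {last ((a + 2^(j-1) - 1) # desc j a p) - 1, last ((a + 2^(j-1) - 1) # desc j a p) + 1}
    \<and> (p = last ((a + 2^(j-1) - 1) # desc j a p) - 1 \<or> p = last ((a + 2^(j-1) - 1) # desc j a p) + 1)
    \<and> a \<le> last ((a + 2^(j-1) - 1) # desc j a p) - 1 \<and> last ((a + 2^(j-1) - 1) # desc j a p) + 1 \<le> a + 2^j - 2"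
  using assms
proof (induction j arbitrary: a p rule: dec_induct)
  case base
  have "p = a \<or> p = a + 1 \<or> p = a + 2" using base by auto
  with base have "p = a \<or> p = a + 2" by auto
  moreover have "desc 2 a p = []" by (simp add: numeral_2_eq_2)
  moreover have "{a..a+2} - {a, a+2} = {a+1::int}" by auto
  moreover have "{a..a+2} - {a+2, a} = {a+1::int}" by auto
  ultimately show ?case
  proof (elim disjE)
    assume "p = a" "desc 2 a p = []" and s: "{a..a+2} - {a, a+2} = {a+1::int}"
    then show ?case using s by (simp add: insert_commute add.commute)
  next
    assume "p = a + 2" "desc 2 a p = []" and s: "{a..a+2} - {a, a+2} = {a+1::int}"
    then show ?case using s by (simp add: insert_commute add.commute)
  qed
next
  case (step j)
  define m :: int where "m = 2^(j-1)"
  have jj: "j = Suc (j - 1)" using step by simp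
  have m2: "(2::int)^j = 2*m" unfolding m_def by (subst jj) simp
  have m4: "(2::int)^(Suc j) = 4*m" using m2 by simp
  have mge: "m \<ge> 2"
  proof -
    have "(2::int)^1 \<le> 2^(j-1)" using step(1) by (intro power_increasing) auto
    then show ?thesis by (simp add: m_def)
  qed
  have nm: "int (2^j - 1) = 2*m - 1" using m2 by (simp add: of_nat_diff)
  have nm': "nat (2*m - 1) = 2^j - 1" unfolding nm[symmetric] by (rule nat_int)
  have nm3: "int (2^j + 2^(j-1) - 1) = 3*m - 1"
  proof -
    have "(1::nat) \<le> 2^j + 2^(j-1)" by (simp add: Suc_leI)
    then have "int (2^j + 2^(j-1) - 1) = 2^j + 2^(j-1) - 1" by (simp add: of_nat_diff)
    then show ?thesis using m2 unfolding m_def by simp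
  qed
  have Ut: "Ut j = replicate (2^j - 1) 1 @ [2^j + 2^(j-1) - 1]" by (simp add: Ut_def)
  have cc: "concat (map Ut (rev [2..<Suc j])) = Ut j @ concat (map Ut (rev [2..<j]))"
    using step(1) by simp
  define c where "c = a + 2*m - 1"
  have cen: "a + 2^(Suc j - 1) - 1 = c" using m2 c_def by simp
  have codd: "odd c" using step(4) unfolding c_def m_def using jj
 by simp
  hence pc: "p \<noteq> c" using step(7) by auto
  show ?case
  proof (cases "p < c")
    case True
    define c' where "c' = a + 2^(j-1) - 1"
    let ?L = "c' # desc j a p"
    define l where "l = last ?L"
    have IH: "steps c' (concat (map Ut (rev [2..<j]))) (desc j a p) \<and> distinct ?L
      \<and> set ?L = {a..a+2^j-2} - {l - 1, l + 1} \<and> (p = l - 1 \<or> p = l + 1)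
      \<and> a \<le> l - 1 \<and> l + 1 \<le> a + 2^j - 2"
      using step.IH[of a p] step True unfolding c'_def l_def c_def m2 by auto
    have ds: "desc (Suc j) a p = [c+1..c+2*m-1] @ ?L"
      using step(1) unfolding c_def c'_def by (simp add: m2 Let_def True[unfolded c_def m2])
    have s1: "steps c (replicate (2^j - 1) 1) [c+1..c+2*m-1]"
      using steps_up[of c "2^j-1"] nm by (simp add: add_diff_eq)
    have lu: "last (c # [c+1..c+2*m-1]) = c + 2*m - 1" using mge by (simp add: last_upto)
    have s2: "steps (c + 2*m - 1) ([2^j + 2^(j-1) - 1] @ concat (map Ut (rev [2..<j]))) ?L"
      using IH nm3 unfolding c'_def c_def m_def by (simp add: m2[unfolded m_def])
    have len1: "length (replicate (2^j - 1) (1::nat)) = length [c+1..c+2*m-1]" using nm' by simp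
    have st: "steps c (concat (map Ut (rev [2..<Suc j]))) (desc (Suc j) a p)"
      unfolding cc Ut ds append_assoc steps_append[OF len1] lu using s1 s2 by simp
    have lst: "last (c # desc (Suc j) a p) = l" unfolding ds l_def by simp
    have I3: "set ?L = {a..c-1} - {l - 1, l + 1}" using IH unfolding c_def m2
      by (simp add: algebra_simps)
    have I4: "p = l - 1 \<or> p = l + 1" and I5: "a \<le> l - 1" and I6: "l + 1 \<le> c - 1"
      using IH unfolding c_def m2 by (simp_all add: algebra_simps)
    have setL: "set ?L \<subseteq> {a..c-1}" using I3 by blast
    have su: "set [c+1..c+2*m-1] = {c+1..c+2*m-1}" by simp
    have d1: "c \<notin> set ?L" using setL by fastforce
    have d2: "set [c+1..c+2*m-1] \<inter> set ?L = {}" using setL unfolding su by fastforce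
    have dist: "distinct (c # desc (Suc j) a p)" unfolding ds using IH d1 d2
      by (simp only: distinct_append distinct.simps distinct_upto set_append Un_iff) simp
    have "set (c # desc (Suc j) a p) = {c} \<union> {c+1..c+2*m-1} \<union> ({a..c-1} - {l - 1, l + 1})"
      unfolding ds using I3 su by auto
    also have "\<dots> = {a..a+2^Suc j-2} - {l - 1, l + 1}"
      using I5 I6 unfolding m4 c_def by auto
    finally have set: "set (c # desc (Suc j) a p) = {a..a+2^Suc j-2} - {l - 1, l + 1}" .
    show ?thesis unfolding cen lst using st dist set I4 I5 I6 unfolding m4 c_def by simp
  next
    case False
    hence pc2: "p > c" using pc by auto
    define a' where "a' = c + 1"
    define c' where "c' = a' + 2^(j-1) - 1"
    let ?L = "c' # desc j a' p"
    define l where "l = last ?L"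
    have ea: "even a'" using codd a'_def by simp
    have IH: "steps c' (concat (map Ut (rev [2..<j]))) (desc j a' p) \<and> distinct ?L
      \<and> set ?L = {a'..a'+2^j-2} - {l - 1, l + 1} \<and> (p = l - 1 \<or> p = l + 1)
      \<and> a' \<le> l - 1 \<and> l + 1 \<le> a' + 2^j - 2"
      using step.IH[of a' p] step pc2 ea unfolding c'_def l_def a'_def c_def m2 m4 by auto
    have ds: "desc (Suc j) a p = rev [a..c-1] @ ?L"
      using step(1) pc2 unfolding c_def c'_def a'_def by (simp add: m2 Let_def)
    have s1: "steps c (replicate (2^j - 1) 1) (rev [a..c-1])"
      using steps_down[of c "2^j-1"] nm unfolding c_def by simp
    have lu: "last (c # rev [a..c-1]) = a" using mge unfolding c_def by (simp add: last_rev upto.simps[of a])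
    have s2: "steps a ([2^j + 2^(j-1) - 1] @ concat (map Ut (rev [2..<j]))) ?L"
      using IH nm3 unfolding c'_def a'_def c_def m_def by (simp add: m2[unfolded m_def])
    have len1: "length (replicate (2^j - 1) (1::nat)) = length (rev [a..c-1])" using nm' c_def by simp
    have st: "steps c (concat (map Ut (rev [2..<Suc j]))) (desc (Suc j) a p)"
      unfolding cc Ut ds append_assoc steps_append[OF len1] lu using s1 s2 by simp
    have lst: "last (c # desc (Suc j) a p) = l" unfolding ds l_def by simp
    have I3: "set ?L = {c+1..a+4*m-2} - {l - 1, l + 1}" using IH unfolding a'_def c_def m2
      by (simp add: algebra_simps)
    have I4: "p = l - 1 \<or> p = l + 1" and I5: "c+1 \<le> l - 1" and I6: "l + 1 \<le> a+4*m-2"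
      using IH unfolding a'_def c_def m2 by (simp_all add: algebra_simps)
    have setL: "set ?L \<subseteq> {c+1..a+4*m-2}" using I3 by blast
    have su: "set (rev [a..c-1]) = {a..c-1}" by simp
    have d1: "c \<notin> set ?L" using setL by fastforce
    have d2: "set (rev [a..c-1]) \<inter> set ?L = {}" using setL unfolding su by fastforce
    have dist: "distinct (c # desc (Suc j) a p)" unfolding ds using IH d1 d2
      by (simp only: distinct_append distinct.simps distinct_upto distinct_rev set_append set_rev Un_iff) simp
    have "set (c # desc (Suc j) a p) = {c} \<union> {a..c-1} \<union> ({c+1..a+4*m-2} - {l - 1, l + 1})"
      unfolding ds using I3 su by auto
    also have "\<dots> = {a..a+2^Suc j-2} - {l - 1, l + 1}"
      using I5 I6 mge unfolding m4 c_def by auto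
    finally have set: "set (c # desc (Suc j) a p) = {a..a+2^Suc j-2} - {l - 1, l + 1}" .
    show ?thesis unfolding cen lst using st dist set I4 I5 I6 mge unfolding m4 c_def by simp
  qed
qed




lemma steps_comb: "steps q Js1 rs1 \<Longrightarrow> steps (last (q # rs1)) Js2 rs2 \<Longrightarrow> steps q (Js1 @ Js2) (rs1 @ rs2)"
  using steps_append steps_len by blast

lemma last_rev_butlast: "L \<noteq> [] \<Longrightarrow> last (last L # rev (butlast L)) = hd L"
proof (induction L rule: rev_induct)
  case (snoc y ys)
  then show ?case by (cases ys) auto
qed simp

lemma Ht_eq: "k \<ge> 2 \<Longrightarrow> Ht k = [2*(2^k-1) + 2^(k-1)] @ concat (map Ut (rev [2..<k])) @ [1, 2*(2^k-1)]
   @ [2,1] @ rev (concat (map Ut (rev [2..<k]))) @ [2^(k-1)+1]"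
proof -
  assume k: "k \<ge> 2"
  have u: "[1..<k] = 1 # [2..<k]" using k upt_conv_Cons[of 1 k] by (simp add: numeral_2_eq_2)
  have u1: "rev (Ut 1) = [2,1]" by (simp add: Ut_def)
  have r: "\<And>xs. rev (concat (map Ut (rev xs))) = concat (map (\<lambda>j. rev (Ut j)) xs)"
    by (induct_tac xs) simp_all
  show ?thesis unfolding Ht_def Let_def u r by (simp only: list.map concat.simps u1 append_assoc)

qed




theorem mainTheorem9:
  fixes k p :: nat and pvis :: bool
  assumes "k \<ge> 2" and "even p" and "p < 2^k - 1"
  shows "\<exists>rs. valid_execution (3*(2^k-1)+2) {int (2^k-1)..<int (2*(2^k-1))}
                 (if pvis then {int p} else {}) (int (3*(2^k-1))) (Ht k) rs
             \<and> int p \<notin> set rs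
             \<and> distinct rs
             \<and> set rs = {0..int (3*(2^k-1)+1)} - {int (2^k-1)..<int (2*(2^k-1))}
                          - {int (3*(2^k-1)), int p}
             \<and> last rs = int (3*(2^k-1)+1)"
proof -
  define V :: int where "V = 2^(k-1)"
  define W :: int where "W = 2*V - 1"
  define P :: int where "P = int p"
  have kk: "k = Suc (k - 1)" using assms(1) by simp
  have V2: "(2::int)^k = 2*V" unfolding V_def by (subst kk) simp
  have Vge: "V \<ge> 2"
  proof -
    have "(2::int)^1 \<le> 2^(k-1)" using assms(1) by (intro power_increasing) auto
    then show ?thesis by (simp add: V_def)
  qed
  have hW: "int (2^k - 1) = W" using V2 unfolding W_def by (simp add: of_nat_diff)
  have e1: "int (3*(2^k-1)) = 3*W" "int (3*(2^k-1)+1) = 3*W+1" "int (2*(2^k-1)) = 2*W"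
    "int (3*(2^k-1)+2) = 3*W+2"
    using hW by simp_all
  have Pev: "even P" "0 \<le> P" using assms unfolding P_def by auto
  have "int p < int (2^k-1)" using assms(3) by (simp only: of_nat_less_iff)
  then have PW: "P < W" using hW unfolding P_def by simp
  define Js where "Js = concat (map Ut (rev [2..<k]))"
  define L where "L = (V - 1) # desc k 0 P"
  define l where "l = last L"
  define e where "e = 2*l - P"
  have DM: "steps (V - 1) Js (desc k 0 P) \<and> distinct L
    \<and> set L = {0..2*V-2} - {l - 1, l + 1} \<and> (P = l - 1 \<or> P = l + 1)
    \<and> 0 \<le> l - 1 \<and> l + 1 \<le> 2*V - 2"
    using desc_main[of k 0 P] assms(1) Pev PW unfolding Js_def L_def l_def V_def W_def V2[unfolded V_def]
    by simp
  have hV: "int (2^(k-1)) = V" unfolding V_def by simp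
  define R where "R = map (\<lambda>x. x + 2*W) (rev (butlast L))"
  define rs where "rs = L @ [e, e+2*W, P+2*W, l+2*W] @ R @ [3*W+1]"
  have S5: "steps (2*W + V - 1) [2^(k-1)+1] [3*W+1]" using hV Vge unfolding W_def by simp
  have S4: "steps (l + 2*W) (rev Js) R"
    using steps_shift[OF steps_rev[OF DM[THEN conjunct1]], of "2*W"]
    unfolding R_def L_def[symmetric] l_def[symmetric] by simp
  have lastR: "last ((l + 2*W) # R) = 2*W + V - 1"
  proof -
    have "(l + 2*W) # R = map (\<lambda>x. x + 2*W) (last L # rev (butlast L))"
      unfolding R_def l_def by simp
    then have "last ((l + 2*W) # R) = last (last L # rev (butlast L)) + 2*W"
      by (simp add: last_map)
    also have "\<dots> = V - 1 + 2*W" using last_rev_butlast[of L] unfolding L_def by simp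
    finally show ?thesis by simp
  qed
  have S45: "steps (l + 2*W) (rev Js @ [2^(k-1)+1]) (R @ [3*W+1])"
    using steps_comb[OF S4] S5 lastR by simp
  have S3: "steps l [1, 2*(2^k-1), 2, 1] [e, e+2*W, P+2*W, l+2*W]"
  proof -
    have "P = l - 1 \<or> P = l + 1" using DM by blast
    moreover have W0: "W \<ge> 0" using Vge unfolding W_def by simp
    ultimately show ?thesis using hW unfolding e_def by (elim disjE) (simp_all add: W0)
  qed
  have S35: "steps l ([1, 2*(2^k-1), 2, 1] @ rev Js @ [2^(k-1)+1]) ([e, e+2*W, P+2*W, l+2*W] @ R @ [3*W+1])"
  proof (rule steps_comb[OF S3])
    have lst3: "last (l # [e, e+2*W, P+2*W, l+2*W]) = l + 2*W" by simp
    show "steps (last (l # [e, e+2*W, P+2*W, l+2*W])) (rev Js @ [2^(k-1)+1]) (R @ [3*W+1])"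
      unfolding lst3 by (rule S45)
  qed
  have S25: "steps (V - 1) (Js @ [1, 2*(2^k-1), 2, 1] @ rev Js @ [2^(k-1)+1]) (desc k 0 P @ [e, e+2*W, P+2*W, l+2*W] @ R @ [3*W+1])"
  proof (rule steps_comb[OF DM[THEN conjunct1]])
    show "steps (last ((V - 1) # desc k 0 P)) ([1, 2*(2^k-1), 2, 1] @ rev Js @ [2^(k-1)+1]) ([e, e+2*W, P+2*W, l+2*W] @ R @ [3*W+1])"
      unfolding L_def[symmetric] l_def[symmetric] by (rule S35)
  qed
  have S1: "steps (3*W) [2*(2^k-1) + 2^(k-1)] [V - 1]"
    using hW hV Vge unfolding W_def by simp
  have ST: "steps (3*W) (Ht k) rs"
  proof -
    have "steps (3*W) ([2*(2^k-1) + 2^(k-1)] @ (Js @ [1, 2*(2^k-1), 2, 1] @ rev Js @ [2^(k-1)+1]))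
       ([V - 1] @ (desc k 0 P @ [e, e+2*W, P+2*W, l+2*W] @ R @ [3*W+1]))"
    proof (rule steps_comb[OF S1])
      show "steps (last [3*W, V - 1]) (Js @ [1, 2*(2^k-1), 2, 1] @ rev Js @ [2^(k-1)+1])
       (desc k 0 P @ [e, e+2*W, P+2*W, l+2*W] @ R @ [3*W+1])" using S25 by (simp only: last.simps list.simps if_True if_False simp_thms)
    qed
    moreover have "Ht k = [2*(2^k-1) + 2^(k-1)] @ (Js @ [1, 2*(2^k-1), 2, 1] @ rev Js @ [2^(k-1)+1])"
      unfolding Ht_eq[OF assms(1)] Js_def by (simp only: append_assoc append_Cons append_Nil)
    moreover have "rs = [V - 1] @ (desc k 0 P @ [e, e+2*W, P+2*W, l+2*W] @ R @ [3*W+1])"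
      unfolding rs_def L_def by simp
    ultimately show ?thesis by simp
  qed
  have W3: "W \<ge> 3" using Vge unfolding W_def by simp
  have distL: "distinct L" using DM by blast
  have sL0: "set L = {0..W-1} - {l - 1, l + 1}" using DM unfolding W_def by simp
  have Pl: "P = l - 1 \<or> P = l + 1" using DM by blast
  have lb: "0 \<le> l - 1" "l + 1 \<le> W - 1" using DM unfolding W_def by simp_all
  have pe: "{l - 1, l + 1} = {P, e}" using Pl unfolding e_def by auto
  have sL: "set L = {0..W-1} - {P, e}" using sL0 pe by simp
  have Pe: "P \<noteq> e" "l \<noteq> P" "l \<noteq> e" using Pl unfolding e_def by auto
  have eA: "0 \<le> e" "e \<le> W - 1" "0 \<le> P" "P \<le> W - 1" using Pl lb unfolding e_def by auto
  have lL: "l \<in> set L" unfolding l_def L_def by simp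
  have bL: "L = butlast L @ [l]" unfolding l_def L_def by simp
  have sbL: "set (butlast L) = set L - {l}"
  proof -
    have "distinct (butlast L @ [l])" using distL bL by simp
    then have "l \<notin> set (butlast L)" by simp
    moreover have "set L = set (butlast L) \<union> {l}" using bL by (metis set_append empty_set list.simps(15))
    ultimately show ?thesis by blast
  qed
  have sR: "x \<in> set R \<longleftrightarrow> x - 2*W \<in> set L \<and> x - 2*W \<noteq> l" for x
  proof -
    have "x \<in> set R \<longleftrightarrow> x - 2*W \<in> set (butlast L)" unfolding R_def by force
    then show ?thesis using sbL by simp
  qed
  have right: "set R \<union> {e+2*W, P+2*W, l+2*W} = {2*W..3*W-1}"
  proof (intro set_eqI iffI)
    fix x assume "x \<in> set R \<union> {e+2*W, P+2*W, l+2*W}"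
    then consider "x \<in> set R" | "x = e+2*W" | "x = P+2*W" | "x = l+2*W" by blast
    then show "x \<in> {2*W..3*W-1}"
    proof cases
      case 1
      then have "x - 2*W \<in> set L" using sR[of x] by blast
      then have "x - 2*W \<in> {0..W-1}" using sL by blast
      then show ?thesis by simp
    qed (use eA lb in simp_all)
  next
    fix x assume x: "x \<in> {2*W..3*W-1}"
    show "x \<in> set R \<union> {e+2*W, P+2*W, l+2*W}"
    proof (cases "x - 2*W \<in> {P, e, l}")
      case True
      then have "x = P + 2*W \<or> x = e + 2*W \<or> x = l + 2*W" by auto
      then show ?thesis by blast
    next
      case False
      have "x - 2*W \<in> {0..W-1}" using x by simp
      then have "x - 2*W \<in> set L" using False unfolding sL by blast
      then have "x \<in> set R" using sR[of x] False by blast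
      then show ?thesis by blast
    qed
  qed
  have left: "set L \<union> {e} = {0..W-1} - {P}"
  proof -
    have "e \<in> {0..W-1} - {P}" using eA Pe by simp
    then show ?thesis unfolding sL by blast
  qed
  have setrs: "set rs = ({0..W-1} - {P}) \<union> {2*W..3*W-1} \<union> {3*W+1}"
  proof -
    have "set rs = (set L \<union> {e}) \<union> (set R \<union> {e+2*W, P+2*W, l+2*W}) \<union> {3*W+1}"
      unfolding rs_def by auto
    then show ?thesis unfolding left right .
  qed
  have T: "({0..W-1} - {P}) \<union> {2*W..3*W-1} \<union> {3*W+1} = {0..3*W+1} - {W..<2*W} - {3*W, P}"
    using eA W3 by auto
  have Pnot: "P \<notin> set rs" unfolding setrs using eA W3 by simp
  have dbl: "distinct (butlast L)"
  proof -
    have "distinct (butlast L @ [l])" using distL bL by simp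
    then show ?thesis by simp
  qed
  have distR: "distinct R" unfolding R_def using dbl by (simp add: distinct_map inj_on_def)
  have RR: "set R \<subseteq> {2*W..3*W-1}" using right by blast
  have R3: "e+2*W \<notin> set R" "P+2*W \<notin> set R" "l+2*W \<notin> set R" using sR sL by auto
  have LL: "set L \<subseteq> {0..W-1}" using sL by blast
  have eL: "e \<notin> set L" using sL by blast
  have lA: "0 \<le> l" "l \<le> W - 1" using lb by simp_all
  have d1: "distinct (R @ [3*W+1])"
  proof -
    have "3*W+1 \<notin> set R" using RR by auto
    then show ?thesis using distR by simp
  qed
  have d2: "distinct [e, e+2*W, P+2*W, l+2*W]" using eA Pe W3 lA by auto
  have d3: "set [e, e+2*W, P+2*W, l+2*W] \<inter> set (R @ [3*W+1]) = {}"
    using R3 eA W3 lA RR by auto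
  have d4: "distinct ([e, e+2*W, P+2*W, l+2*W] @ R @ [3*W+1])"
    using d1 d2 d3 distinct_append[of "[e, e+2*W, P+2*W, l+2*W]" "R @ [3*W+1]"] by blast
  have d5: "set L \<inter> set ([e, e+2*W, P+2*W, l+2*W] @ R @ [3*W+1]) = {}"
  proof -
    have a: "\<forall>x\<in>set L. x \<le> W - 1" using LL by auto
    have b: "\<forall>x\<in>set R. 2*W \<le> x" using RR by auto
    show ?thesis using a b eL eA lA W3 by fastforce
  qed
  have dist: "distinct rs"
    unfolding rs_def using distL d4 d5 distinct_append[of L "[e, e+2*W, P+2*W, l+2*W] @ R @ [3*W+1]"] by blast
  have lastrs: "last rs = 3*W+1" unfolding rs_def by simp
  show ?thesis
  proof (intro exI[of _ rs] conjI)
    show "valid_execution (3*(2^k-1)+2) {int (2^k-1)..<int (2*(2^k-1))}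
                 (if pvis then {int p} else {}) (int (3*(2^k-1))) (Ht k) rs"
    proof -
      have sub: "set rs \<subseteq> {0..<3*W+2} - {W..<2*W} - insert (3*W) (if pvis then {P} else {})"
      proof
        fix x assume xr: "x \<in> set rs"
        have setT: "set rs = {0..3*W+1} - {W..<2*W} - {3*W, P}" using setrs T by (rule trans)
        have "x \<in> {0..3*W+1} - {W..<2*W} - {3*W, P}" using xr unfolding setT .
        then have "0 \<le> x \<and> x \<le> 3*W+1 \<and> \<not> (W \<le> x \<and> x < 2*W) \<and> x \<noteq> 3*W \<and> x \<noteq> P" by simp
        then show "x \<in> {0..<3*W+2} - {W..<2*W} - insert (3*W) (if pvis then {P} else {})"
          by (cases pvis) simp_all
      qed
      show ?thesis
        unfolding valid_execution_def frog_steps e1 hW P_def[symmetric]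
        using ST dist sub by blast
    qed
    show "int p \<notin> set rs" using Pnot P_def by simp
    show "distinct rs" by (rule dist)
    show "set rs = {0..int (3*(2^k-1)+1)} - {int (2^k-1)..<int (2*(2^k-1))} - {int (3*(2^k-1)), int p}"
      unfolding e1 hW P_def[symmetric] setrs T ..
    show "last rs = int (3*(2^k-1)+1)" unfolding e1 lastrs ..
  qed
qed


end
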